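(* Let $\mathcal B_{\mathcal E}$ be the set of partitions $\beta_1+\cdots+\beta_n$ ($0<\beta_1\le\cdots\le\beta_n$) with $\beta_1\in\{2,3\}$ and, for each $2\le i\le n$: if $\beta_i$ is odd then $3\le\beta_i-\beta_{i-1}\le4$, and if $\beta_i$ is even then $0\le\beta_i-\beta_{i-1}\le1$. Let $b_{\mathcal E}(n)=\sum q^{|\beta|}$ over $\beta\in\mathcal B_{\mathcal E}$ with exactly $n$ parts ($b_{\mathcal E}(0)=1$). Then $$\sum_{n\ge0}\frac{b_{\mathcal E}(n)}{(q^2;q^2)_n}=1+\frac{q^2+q^3}{1-q^2}+\sum_{n\ge2}\frac{(-q^3;q^4)_{n-1}\,q^{2n}(1+q^{2n-1})}{(q^2;q^2)_n}.$$
   Context: $(a;q)_n=\prod_{j=0}^{n-1}(1-aq^j)$; $|\beta|$ is the sum of parts. *)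

theory Defs
  imports Complex_Main
begin

definition qpoch :: "complex \<Rightarrow> complex \<Rightarrow> nat \<Rightarrow> complex" where
  "qpoch a q n = (\<Prod>j<n. 1 - a * q ^ j)"

text \<open>A partition beta_1 + ... + beta_n with 0 < beta_1 <= ... <= beta_n, written as the
  list [beta_1, ..., beta_n] (index i of the list = part beta_(i+1)), lying in B_E.\<close>
definition in_BE :: "nat list \<Rightarrow> bool" where
  "in_BE \<beta> \<longleftrightarrow> \<beta> \<noteq> [] \<and> sorted \<beta> \<and> (\<forall>x\<in>set \<beta>. 0 < x) \<and>
     \<beta> ! 0 \<in> {2, 3} \<and>
     (\<forall>i. 1 \<le> i \<and> i < length \<beta> \<longrightarrow>
        (odd (\<beta> ! i) \<longrightarrow> \<beta> ! (i - 1) + 3 \<le> \<beta> ! i \<and> \<beta> ! i \<le> \<beta> ! (i - 1) + 4) \<and>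
        (even (\<beta> ! i) \<longrightarrow> \<beta> ! (i - 1) \<le> \<beta> ! i \<and> \<beta> ! i \<le> \<beta> ! (i - 1) + 1))"

definition bE :: "nat \<Rightarrow> complex \<Rightarrow> complex" where
  "bE n q = (if n = 0 then 1
             else (\<Sum>\<beta>\<in>{\<beta>. length \<beta> = n \<and> in_BE \<beta>}. q ^ sum_list \<beta>))"

end

theory Submission imports Defs begin

definition stp :: "nat \<Rightarrow> nat \<Rightarrow> bool" where
 "stp x y \<longleftrightarrow> (odd y \<longrightarrow> x + 3 \<le> y \<and> y \<le> x + 4) \<and> (even y \<longrightarrow> x \<le> y \<and> y \<le> x + 1)"

fun cv :: "nat list \<Rightarrow> bool" where
 "cv [] = True" | "cv [x] = True" | "cv (x#y#ys) = (stp x y \<and> cv (y#ys))"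

definition nx1 :: "nat \<Rightarrow> nat" where "nx1 x = (if even x then x else x+1)"
definition nx2 :: "nat \<Rightarrow> nat" where "nx2 x = (if even x then x+3 else x+4)"

lemma stp_iff: "stp x y \<longleftrightarrow> y = nx1 x \<or> y = nx2 x"
  unfolding stp_def nx1_def nx2_def by presburger

lemma nx_neq: "nx1 x \<noteq> nx2 x" unfolding nx1_def nx2_def by auto

lemma cv_nth: "cv xs \<longleftrightarrow> (\<forall>i. 1 \<le> i \<and> i < length xs \<longrightarrow> stp (xs!(i-1)) (xs!i))"
proof (induction xs rule: cv.induct)
  case (3 x y ys)
  have "(\<forall>i. 1 \<le> i \<and> i < length (x#y#ys) \<longrightarrow> stp ((x#y#ys)!(i-1)) ((x#y#ys)!i))
     \<longleftrightarrow> stp x y \<and> (\<forall>i. 1 \<le> i \<and> i < length (y#ys) \<longrightarrow> stp ((y#ys)!(i-1)) ((y#ys)!i))"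
  proof
    assume H: "\<forall>i. 1 \<le> i \<and> i < length (x#y#ys) \<longrightarrow> stp ((x#y#ys)!(i-1)) ((x#y#ys)!i)"
    have "stp x y" using H[rule_format, of 1] by simp
    moreover have "\<forall>i. 1 \<le> i \<and> i < length (y#ys) \<longrightarrow> stp ((y#ys)!(i-1)) ((y#ys)!i)"
    proof (intro allI impI)
      fix i assume "1 \<le> i \<and> i < length (y#ys)"
      then show "stp ((y#ys)!(i-1)) ((y#ys)!i)" using H[rule_format, of "Suc i"]
        by (cases i) auto
    qed
    ultimately show "stp x y \<and> (\<forall>i. 1 \<le> i \<and> i < length (y#ys) \<longrightarrow> stp ((y#ys)!(i-1)) ((y#ys)!i))" by blast
  next
    assume H: "stp x y \<and> (\<forall>i. 1 \<le> i \<and> i < length (y#ys) \<longrightarrow> stp ((y#ys)!(i-1)) ((y#ys)!i))"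
    show "\<forall>i. 1 \<le> i \<and> i < length (x#y#ys) \<longrightarrow> stp ((x#y#ys)!(i-1)) ((x#y#ys)!i)"
    proof (intro allI impI)
      fix i assume i: "1 \<le> i \<and> i < length (x#y#ys)"
      show "stp ((x#y#ys)!(i-1)) ((x#y#ys)!i)"
      proof (cases "i = 1")
        case True then show ?thesis using H by simp
      next
        case False
        then obtain j where j: "i = Suc j" "1 \<le> j" using i by (cases i) auto
        then show ?thesis using H i by auto
      qed
    qed
  qed
  then show ?case using 3 by simp
qed auto

lemma cv_sorted: "cv xs \<Longrightarrow> sorted xs"
  by (induction xs rule: cv.induct) (auto simp: stp_def)

lemma in_BE_iff: "in_BE \<beta> \<longleftrightarrow> (\<exists>a l. \<beta> = a#l \<and> a \<in> {2,3} \<and> cv (a#l))"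
proof
  assume H: "in_BE \<beta>"
  then obtain a l where b: "\<beta> = a#l" unfolding in_BE_def by (cases \<beta>) auto
  have "cv \<beta>" using H unfolding in_BE_def cv_nth stp_def by blast
  then show "\<exists>a l. \<beta> = a#l \<and> a \<in> {2,3} \<and> cv (a#l)" using H b unfolding in_BE_def by auto
next
  assume "\<exists>a l. \<beta> = a#l \<and> a \<in> {2,3} \<and> cv (a#l)"
  then obtain a l where b: "\<beta> = a#l" "a \<in> {2,3}" "cv (a#l)" by blast
  have s: "sorted \<beta>" using b cv_sorted[OF b(3)] by simp
  have "\<forall>x\<in>set \<beta>. 0 < x" using s b by auto
  then show "in_BE \<beta>" unfolding in_BE_def using b s cv_nth[of \<beta>] unfolding stp_def by auto
qed

definition T :: "nat \<Rightarrow> nat \<Rightarrow> nat list set" where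
  "T n a = {l. length l = n \<and> cv (a#l)}"

lemma T_0: "T 0 a = {[]}" by (auto simp: T_def)

lemma T_Suc: "T (Suc n) a = Cons (nx1 a) ` T n (nx1 a) \<union> Cons (nx2 a) ` T n (nx2 a)"
proof (rule set_eqI)
  fix l
  show "l \<in> T (Suc n) a \<longleftrightarrow> l \<in> Cons (nx1 a) ` T n (nx1 a) \<union> Cons (nx2 a) ` T n (nx2 a)"
    by (cases l) (auto simp: T_def stp_iff)
qed

lemma T_finite: "finite (T n a)"
  by (induction n arbitrary: a) (auto simp: T_0 T_Suc)

definition F :: "complex \<Rightarrow> nat \<Rightarrow> nat \<Rightarrow> complex" where
  "F q n a = (\<Sum>l\<in>T n a. q ^ sum_list l)"

lemma F_Suc: "F q (Suc n) a = q^(nx1 a) * F q n (nx1 a) + q^(nx2 a) * F q n (nx2 a)"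
proof -
  have d: "Cons (nx1 a) ` T n (nx1 a) \<inter> Cons (nx2 a) ` T n (nx2 a) = {}" using nx_neq by auto
  have "F q (Suc n) a = (\<Sum>l\<in>Cons (nx1 a) ` T n (nx1 a). q ^ sum_list l) + (\<Sum>l\<in>Cons (nx2 a) ` T n (nx2 a). q ^ sum_list l)"
    unfolding F_def T_Suc by (rule sum.union_disjoint) (auto simp: T_finite d)
  also have "\<dots> = q^(nx1 a) * F q n (nx1 a) + q^(nx2 a) * F q n (nx2 a)"
    by (simp add: sum.reindex F_def sum_distrib_left power_add)
  finally show ?thesis .
qed

lemma qpoch_Suc: "qpoch a q (Suc n) = qpoch a q n * (1 - a * q^n)"
  by (simp add: qpoch_def)

lemma F_closed: "F q n a = q^(n*a + (if odd a then n else 0)) * qpoch (-(q^3)) (q^4) n"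
proof (induction n arbitrary: a)
  case 0 then show ?case by (simp add: F_def T_0 qpoch_def)
next
  case (Suc n)
  define P where "P = qpoch (-(q^3)) (q^4) n"
  have P: "qpoch (-(q^3)) (q^4) (Suc n) = P * (1 + q^(3+4*n))"
    by (simp add: qpoch_Suc power_add power_mult P_def)
  show ?case
  proof (cases "even a")
    case True
    have e: "a + 3 + ((n*(a+3)) + n) = Suc n * a + (3+4*n)" by (simp add: algebra_simps)
    have 1: "q^(a+3) * q^(n*(a+3)+n) = q^(Suc n * a) * q^(3+4*n)"
      by (simp only: power_add[symmetric] e)
    have 2: "q^a * q^(n*a) = q^(Suc n * a)" by (simp add: power_add[symmetric])
    have "F q (Suc n) a = q^a * (q^(n*a) * P) + q^(a+3) * (q^(n*(a+3)+n) * P)"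
      using True by (simp add: F_Suc Suc nx1_def nx2_def P_def)
    also have "\<dots> = (q^a * q^(n*a)) * P + (q^(a+3) * q^(n*(a+3)+n)) * P" by (simp only: mult.assoc)
    also have "\<dots> = q^(Suc n * a) * (P * (1 + q^(3+4*n)))" unfolding 1 2 by (simp add: algebra_simps)
    finally show ?thesis using True P by simp
  next
    case False
    have e: "a + 4 + (n*(a+4) + n) = Suc n * a + Suc n + (3+4*n)" by (simp add: algebra_simps)
    have 1: "q^(a+4) * q^(n*(a+4)+n) = q^(Suc n * a + Suc n) * q^(3+4*n)"
      by (simp only: power_add[symmetric] e)
    have e2: "a + 1 + (n*(a+1)) = Suc n * a + Suc n" by (simp add: algebra_simps)
    have 2: "q^(a+1) * q^(n*(a+1)) = q^(Suc n * a + Suc n)"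
      by (simp only: power_add[symmetric] e2)
    have "F q (Suc n) a = q^(a+1) * (q^(n*(a+1)) * P) + q^(a+4) * (q^(n*(a+4)+n) * P)"
      using False by (simp add: F_Suc Suc nx1_def nx2_def P_def)
    also have "\<dots> = (q^(a+1) * q^(n*(a+1))) * P + (q^(a+4) * q^(n*(a+4)+n)) * P" by (simp only: mult.assoc)
    also have "\<dots> = q^(Suc n * a + Suc n) * (P * (1 + q^(3+4*n)))" unfolding 1 2 by (simp add: algebra_simps)
    finally show ?thesis using False P by simp
  qed
qed

lemma bE_Suc: "bE (Suc n) q = qpoch (-(q^3)) (q^4) n * q^(2*Suc n) * (1 + q^(2*Suc n - 1))"
proof -
  have S: "{\<beta>. length \<beta> = Suc n \<and> in_BE \<beta>} = Cons 2 ` T n 2 \<union> Cons 3 ` T n 3"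
    by (auto simp: in_BE_iff T_def)
  have "bE (Suc n) q = (\<Sum>\<beta>\<in>Cons 2 ` T n 2. q ^ sum_list \<beta>) + (\<Sum>\<beta>\<in>Cons 3 ` T n 3. q ^ sum_list \<beta>)"
    unfolding bE_def S by (simp, rule sum.union_disjoint) (auto simp: T_finite)
  also have "\<dots> = q^2 * F q n 2 + q^3 * F q n 3"
    by (simp add: sum.reindex F_def sum_distrib_left power_add power2_eq_square power3_eq_cube mult.assoc)
  also have "\<dots> = qpoch (-(q^3)) (q^4) n * q^(2*Suc n) * (1 + q^(2*Suc n - 1))"
  proof -
    have a: "q^2 * q^(n*2) = q^(2*Suc n)" by (simp add: power_add[symmetric] algebra_simps)
    have e: "3 + (n*3+n) = 2*Suc n + (2*Suc n - 1)" by simp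
    have b: "q^3 * q^(n*3+n) = q^(2*Suc n) * q^(2*Suc n - 1)"
      by (simp only: power_add[symmetric] e)
    define P where "P = qpoch (-(q^3)) (q^4) n"
    have "q^2 * F q n 2 + q^3 * F q n 3 = (q^2 * q^(n*2)) * P + (q^3 * q^(n*3+n)) * P"
      unfolding F_closed P_def by (simp add: mult.assoc)
    also have "\<dots> = P * q^(2*Suc n) * (1 + q^(2*Suc n - 1))" unfolding a b by (simp add: algebra_simps)
    finally show ?thesis unfolding P_def .
  qed
  finally show ?thesis .
qed

lemma norm_pow_lt1: "norm (q::complex) < 1 \<Longrightarrow> 0 < k \<Longrightarrow> norm (q^k) < 1"
  by (simp add: norm_power power_less_one_iff)

lemma one_plus_nz: "norm (w::complex) < 1 \<Longrightarrow> 1 + w \<noteq> 0"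
  by (metis add_eq_0_iff norm_minus_cancel norm_one order_less_irrefl)

lemma one_minus_nz: "norm (w::complex) < 1 \<Longrightarrow> 1 - w \<noteq> 0"
  by auto

lemma D_nz: "norm (q::complex) < 1 \<Longrightarrow> qpoch (q^2) (q^2) n \<noteq> 0"
proof -
  assume q: "norm q < 1"
  have "\<And>j. 1 - q^2 * (q^2)^j \<noteq> 0"
  proof -
    fix j
    have "q^2 * (q^2)^j = q^(2*j+2)" by (simp add: power_mult[symmetric] power_add[symmetric] algebra_simps)
    then show "1 - q^2 * (q^2)^j \<noteq> 0" using norm_pow_lt1[OF q, of "2*j+2"] one_minus_nz by simp
  qed
  then show ?thesis unfolding qpoch_def by (simp add: prod_zero_iff)
qed

lemma ab: "(D::complex) \<noteq> 0 \<Longrightarrow> A \<noteq> 0 \<Longrightarrow> B \<noteq> 0 \<Longrightarrow>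
  Pn*X*(q2*Y)*Z/(D*B) = (X*q2*Z/(A*B)) * (Pn*Y*A/D)"
  by (simp add: field_simps)

lemma pw: "(q::'a::monoid_mult)^(k + 2*n) = q^k * (q^2)^n"
  by (simp add: power_add power_mult)

theorem theorem16:
  fixes q :: complex
  assumes "norm q < 1"
  shows "summable (\<lambda>n. bE n q / qpoch (q^2) (q^2) n)
    \<and> summable (\<lambda>m. let n = m + 2 in
          qpoch (- (q^3)) (q^4) (n - 1) * q^(2*n) * (1 + q^(2*n - 1)) / qpoch (q^2) (q^2) n)
    \<and> (\<Sum>n. bE n q / qpoch (q^2) (q^2) n)
      = 1 + (q^2 + q^3) / (1 - q^2)
        + (\<Sum>m. let n = m + 2 in
          qpoch (- (q^3)) (q^4) (n - 1) * q^(2*n) * (1 + q^(2*n - 1)) / qpoch (q^2) (q^2) n)"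
proof -
  define g where "g n = bE n q / qpoch (q^2) (q^2) n" for n
  define P where "P n = qpoch (-(q^3)) (q^4) n" for n
  define D where "D n = qpoch (q^2) (q^2) n" for n
  define R where "R n = (1 + q^3*(q^4)^n) * q^2 * (1 + q^3*(q^2)^n) / ((1 + q*(q^2)^n) * (1 - q^4*(q^2)^n))" for n
  have q: "norm q < 1" by fact
  have Dnz: "D n \<noteq> 0" for n using D_nz[OF q] D_def by simp
  have gS: "g (Suc n) = P n * q^(2*n+2) * (1 + q^(2*n+1)) / D (Suc n)" for n
    unfolding g_def bE_Suc P_def D_def by simp
  have PS: "P (Suc n) = P n * (1 + q^3*(q^4)^n)" for n
    unfolding P_def qpoch_Suc by simp
  have DS: "D (Suc (Suc n)) = D (Suc n) * (1 - q^4*(q^2)^n)" for n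
  proof -
    have "q^2 * (q^2)^Suc n = q^(2 + 2*Suc n)" by (simp only: pw)
    also have "\<dots> = q^(4 + 2*n)" by (rule arg_cong[where f="\<lambda>k. q^k"]) simp
    finally have "q^2 * (q^2)^Suc n = q^4*(q^2)^n" by (simp only: pw)
    then show ?thesis unfolding D_def qpoch_Suc[of _ _ "Suc n"] by simp
  qed
  have e1: "q^(2*n+1) = q*(q^2)^n" for n by (simp add: power_mult[symmetric] algebra_simps)
  have e2: "q^(2*Suc n+1) = q^3*(q^2)^n" for n
  proof -
    have "2*Suc n+1 = 3 + 2*n" by simp
    then show ?thesis by (simp only: pw)
  qed
  have e3: "q^(2*Suc n+2) = q^2 * q^(2*n+2)" for n by (simp add: power_add[symmetric] algebra_simps)
  have nz1: "1 + q*(q^2)^n \<noteq> 0" for n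
    using one_plus_nz[OF norm_pow_lt1[OF q, of "2*n+1"]] unfolding e1 by simp
  have nz2: "1 - q^4*(q^2)^n \<noteq> 0" for n
  proof -
    have "q^4*(q^2)^n = q^(4+2*n)" by (simp only: pw)
    then show ?thesis using one_minus_nz[OF norm_pow_lt1[OF q, of "4+2*n"]] by simp
  qed
  have ratio: "g (Suc (Suc n)) = R n * g (Suc n)" for n
  proof -
    have "g (Suc (Suc n)) = P n * (1 + q^3*(q^4)^n) * (q^2 * q^(2*n+2)) * (1 + q^3*(q^2)^n) / (D (Suc n) * (1 - q^4*(q^2)^n))"
      using gS[of "Suc n"] unfolding PS DS e2 e3[symmetric] by simp
    also have "\<dots> = R n * g (Suc n)"
      unfolding gS R_def e1 using ab[OF Dnz[of "Suc n"] nz1[of n] nz2[of n]] by simp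
    finally show ?thesis .
  qed
  have lim: "R \<longlonglongrightarrow> (1 + q^3*0) * q^2 * (1 + q^3*0) / ((1 + q*0) * (1 - q^4*0))"
    unfolding R_def
    by (intro tendsto_intros LIMSEQ_power_zero norm_pow_lt1[OF q]) simp_all
  then have lim': "(\<lambda>n. norm (R n)) \<longlonglongrightarrow> norm q ^ 2" by (auto dest: tendsto_norm simp: norm_power)
  define c where "c = (1 + norm q ^ 2) / 2"
  have r2: "norm q ^ 2 < 1" using q by (simp add: power_less_one_iff)
  have c1: "c < 1" and c2: "norm q ^ 2 < c" using r2 unfolding c_def by auto
  have "eventually (\<lambda>n. norm (R n) < c) sequentially"
    using order_tendstoD(2)[OF lim' c2] .
  then obtain N where N: "\<And>n. n \<ge> N \<Longrightarrow> norm (R n) < c" by (auto simp: eventually_sequentially)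
  have "summable (\<lambda>n. g (Suc n))"
  proof (rule summable_ratio_test[OF c1])
    fix n assume "n \<ge> N"
    then have "norm (R n) \<le> c" using N by (simp add: less_imp_le)
    then show "norm (g (Suc (Suc n))) \<le> c * norm (g (Suc n))"
      unfolding ratio norm_mult by (simp add: mult_right_mono)
  qed
  then have sg: "summable g" using summable_Suc_iff by blast
  have L: "(\<lambda>m. let n = m + 2 in
          qpoch (- (q^3)) (q^4) (n - 1) * q^(2*n) * (1 + q^(2*n - 1)) / qpoch (q^2) (q^2) n)
        = (\<lambda>m. g (m + 2))"
  proof
    fix m
    have "m + 2 = Suc (Suc m)" by simp
    then show "(let n = m + 2 in
          qpoch (- (q^3)) (q^4) (n - 1) * q^(2*n) * (1 + q^(2*n - 1)) / qpoch (q^2) (q^2) n) = g (m + 2)"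
      unfolding g_def Let_def by (simp only: bE_Suc) simp
  qed
  have g0: "g 0 = 1" by (simp add: g_def bE_def qpoch_def)
  have g1: "g 1 = (q^2 + q^3) / (1 - q^2)"
    using gS[of 0] by (simp add: P_def D_def qpoch_def algebra_simps power2_eq_square power3_eq_cube)
  have "suminf g = (\<Sum>m. g (m + 2)) + (\<Sum>i<2. g i)" by (rule suminf_split_initial_segment[OF sg])
  also have "(\<Sum>i<2. g i) = g 0 + g 1" by (simp add: numeral_2_eq_2)
  finally have S: "suminf g = 1 + (q^2 + q^3) / (1 - q^2) + (\<Sum>m. g (m + 2))"
    unfolding g0 g1 by simp
  have sg2: "summable (\<lambda>m. g (m + 2))" using sg by (simp only: summable_iff_shift)
  show ?thesis unfolding L using sg sg2 S unfolding g_def by blast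
qed

end
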